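(* For $n\in\{3,4\}$ there is no u-p-word for $n$-permutations of the form $u=u_1\Diamond u_3u_4\cdots u_N$ containing exactly one $\Diamond$ (that is, with $u_1,u_3,\ldots,u_N$ all integers).
   Context: An $n$-permutation is a permutation of $\{1,\ldots,n\}$. For a word $w$ of distinct numbers, $\mathrm{red}(w)$ is obtained by replacing the $i$-th smallest letter by $i$. Let $\Diamond$ be a symbol not among the integers. A word $f=f_1\cdots f_n$ over the positive integers together with $\Diamond$, whose integer letters are pairwise distinct, covers an $n$-permutation $\pi$ if one can substitute real numbers for the occurrences of $\Diamond$ (independently) so that the resulting word has $n$ pairwise distinct entries and reduces to $\pi$; equivalently, $f_i<f_j\iff\pi_i<\pi_j$ for all positions $i,j$ holding integers. A u-p-word for $n$-permutations is a word $u_1\cdots u_N$, $N\geq n$, over this alphabet containing at least one $\Diamond$, such that every factor $u_i\cdots u_{i+n-1}$ ($1\leq i\leq N-n+1$) has pairwise distinct integer letters and every $n$-permutation is covered by exactly one of these factors. *)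

theory Defs
  imports Main
begin

type_synonym letter = "nat option"

abbreviation Diamond :: letter where "Diamond \<equiv> None"

definition perms :: "nat \<Rightarrow> nat list set" where
  "perms n = {p. length p = n \<and> distinct p \<and> set p = {1..n}}"

definition int_distinct :: "letter list \<Rightarrow> bool" where
  "int_distinct f \<longleftrightarrow> (\<forall>i j a b. i < length f \<and> j < length f \<and> i \<noteq> j \<and>
      f ! i = Some a \<and> f ! j = Some b \<longrightarrow> a \<noteq> b)"

text \<open>f covers the n-permutation p (the equivalent order-pattern formulation).\<close>
definition covers :: "letter list \<Rightarrow> nat list \<Rightarrow> bool" where
  "covers f p \<longleftrightarrow> length f = length p \<and> int_distinct f \<and>
     (\<forall>i j a b. i < length f \<and> j < length f \<and> f ! i = Some a \<and> f ! j = Some b \<longrightarrow>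
        (a < b \<longleftrightarrow> p ! i < p ! j))"

text \<open>The factor u_{i+1} ... u_{i+n} (0-based start index i).\<close>
definition factor :: "letter list \<Rightarrow> nat \<Rightarrow> nat \<Rightarrow> letter list" where
  "factor u n i = take n (drop i u)"

definition up_word :: "nat \<Rightarrow> letter list \<Rightarrow> bool" where
  "up_word n u \<longleftrightarrow> length u \<ge> n \<and> Diamond \<in> set u \<and>
     (\<forall>k. Some k \<in> set u \<longrightarrow> k > 0) \<and>
     (\<forall>i. i + n \<le> length u \<longrightarrow> int_distinct (factor u n i)) \<and>
     (\<forall>p \<in> perms n. \<exists>!i. i + n \<le> length u \<and> covers (factor u n i) p)"

end

theory Submission
  imports Defs
begin

lemma all4: "(\<forall>i<(4::nat). P i) \<longleftrightarrow> P 0 \<and> P 1 \<and> P 2 \<and> P 3"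
  by (auto simp: less_Suc_eq eval_nat_numeral)

lemma allSuc: "(\<forall>i<Suc n. P i) \<longleftrightarrow> P 0 \<and> (\<forall>i<n. P (Suc i))"
  by (auto simp: less_Suc_eq_0_disj)

lemma covers_alt: "covers f p \<longleftrightarrow> length p = length f \<and> int_distinct f \<and>
  (\<forall>i<length f. \<forall>j<length f. case f!i of None \<Rightarrow> True | Some a \<Rightarrow>
      (case f!j of None \<Rightarrow> True | Some b \<Rightarrow> (a<b \<longleftrightarrow> p!i<p!j)))"
  unfolding covers_def by (auto split: option.splits)

definition L24 :: "nat list list" where "L24 = [[1,2,3,4], [1,2,4,3], [1,3,2,4], [1,3,4,2], [1,4,2,3], [1,4,3,2], [2,1,3,4], [2,1,4,3], [2,3,1,4], [2,3,4,1], [2,4,1,3], [2,4,3,1], [3,1,2,4], [3,1,4,2], [3,2,1,4], [3,2,4,1], [3,4,1,2], [3,4,2,1], [4,1,2,3], [4,1,3,2], [4,2,1,3], [4,2,3,1], [4,3,1,2], [4,3,2,1]]"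

lemma L24_perms: "set L24 \<subseteq> perms 4"
  by (simp add: L24_def perms_def) (auto)

lemma L: assumes "distinct [x,y,z,w::nat]"
  shows "\<exists>r\<in>perms 4. covers [Some x, Some y, Some z, Some w] r"
proof -
  have id: "int_distinct [Some x, Some y, Some z, Some w]"
    using assms unfolding int_distinct_def by (auto simp: allSuc less_Suc_eq eval_nat_numeral nth_Cons split: nat.splits)
  have cv: "covers [Some x, Some y, Some z, Some w] r \<longleftrightarrow> length r = 4 \<and>
    (x<y \<longleftrightarrow> r!0<r!1) \<and> (x<z \<longleftrightarrow> r!0<r!2) \<and> (x<w \<longleftrightarrow> r!0<r!3) \<and>
    (y<x \<longleftrightarrow> r!1<r!0) \<and> (y<z \<longleftrightarrow> r!1<r!2) \<and> (y<w \<longleftrightarrow> r!1<r!3) \<and>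
    (z<x \<longleftrightarrow> r!2<r!0) \<and> (z<y \<longleftrightarrow> r!2<r!1) \<and> (z<w \<longleftrightarrow> r!2<r!3) \<and>
    (w<x \<longleftrightarrow> r!3<r!0) \<and> (w<y \<longleftrightarrow> r!3<r!1) \<and> (w<z \<longleftrightarrow> r!3<r!2)" for r
    by (simp add: covers_alt id allSuc eval_nat_numeral)
  have nl: "y<x \<longleftrightarrow> \<not> x<y" "z<x \<longleftrightarrow> \<not> x<z" "w<x \<longleftrightarrow> \<not> x<w" "z<y \<longleftrightarrow> \<not> y<z"
    "w<y \<longleftrightarrow> \<not> y<w" "w<z \<longleftrightarrow> \<not> z<w" using assms by auto
  have "\<exists>r\<in>set L24. covers [Some x, Some y, Some z, Some w] r"
    unfolding cv nl L24_def
    by (cases "x<y"; cases "x<z"; cases "x<w"; cases "y<z"; cases "y<w"; cases "z<w"; simp)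
  then show ?thesis using L24_perms by blast
qed

lemma factor4: "i + 4 \<le> length u \<Longrightarrow> factor u 4 i = [u!i, u!(i+1), u!(i+2), u!(i+3)]"
  by (rule nth_equalityI) (auto simp: factor_def less_Suc_eq eval_nat_numeral nth_Cons split: nat.splits)

lemma factor3: "i + 3 \<le> length u \<Longrightarrow> factor u 3 i = [u!i, u!(i+1), u!(i+2)]"
  by (rule nth_equalityI) (auto simp: factor_def less_Suc_eq eval_nat_numeral nth_Cons split: nat.splits)

lemma covers_cmp: "covers f p \<Longrightarrow> i<length f \<Longrightarrow> j<length f \<Longrightarrow> f!i = Some x \<Longrightarrow> f!j = Some y
  \<Longrightarrow> (x<y \<longleftrightarrow> p!i<p!j)"
  unfolding covers_def by blast

lemma covers_diff: "covers f p \<Longrightarrow> covers f q \<Longrightarrow> i<length f \<Longrightarrow> j<length f \<Longrightarrow> f!i = Some x \<Longrightarrow> f!j = Some y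
  \<Longrightarrow> p!i<p!j \<Longrightarrow> \<not> q!i<q!j \<Longrightarrow> False"
  using covers_cmp by blast

lemma inL24: "p \<in> set L24 \<Longrightarrow> p \<in> perms 4"
  using L24_perms by blast

lemma factor_nth: "i + n \<le> length u \<Longrightarrow> k < n \<Longrightarrow> factor u n i ! k = u ! (i+k)"
  by (simp add: factor_def)

lemma idist_ne: "int_distinct f \<Longrightarrow> i<length f \<Longrightarrow> j<length f \<Longrightarrow> i\<noteq>j \<Longrightarrow>
   f!i = Some x \<Longrightarrow> f!j = Some y \<Longrightarrow> x\<noteq>y"
  unfolding int_distinct_def by blast

lemma idist4: "int_distinct [Some x, Some y, Some z, Some w] \<Longrightarrow> distinct [x,y,z,w]"
  unfolding int_distinct_def
  apply (simp)
  apply (metis (no_types) One_nat_def Suc_1 nth_Cons_0 nth_Cons_Suc numeral_3_eq_3 zero_less_Suc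
      Suc_less_eq numeral_2_eq_2 n_not_Suc_n Suc_inject zero_neq_numeral less_Suc_eq lessI nat.distinct(1))
  done

lemma no4:
  assumes up: "up_word 4 u" and u1: "u!1 = None"
    and oth: "\<forall>i<length u. i \<noteq> 1 \<longrightarrow> u ! i \<noteq> Diamond"
  shows False
proof -
  have len: "length u \<ge> 4" and idist: "\<And>i. i+4 \<le> length u \<Longrightarrow> int_distinct (factor u 4 i)"
    and uniq: "\<forall>p\<in>perms 4. \<exists>!i. i + 4 \<le> length u \<and> covers (factor u 4 i) p"
    using up unfolding up_word_def by auto
  define A where "A k = the (u!k)" for k
  have uA: "\<And>k. k < length u \<Longrightarrow> k \<noteq> 1 \<Longrightarrow> u!k = Some (A k)"
    using oth by (auto simp: A_def)
  have U1: "\<And>p i j. p \<in> perms 4 \<Longrightarrow> i+4 \<le> length u \<Longrightarrow> j+4 \<le> length u \<Longrightarrow>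
     covers (factor u 4 i) p \<Longrightarrow> covers (factor u 4 j) p \<Longrightarrow> i = j"
    using uniq by blast
  have E: "\<And>p. p \<in> perms 4 \<Longrightarrow> \<exists>i. i+4 \<le> length u \<and> covers (factor u 4 i) p"
    using uniq by blast
  define a where "a = A 0"
  define b where "b = A 2"
  define c where "c = A 3"
  have F0: "factor u 4 0 = [Some a, None, Some b, Some c]"
  proof -
    have "factor u 4 0 = [u!0,u!1,u!2,u!3]" using factor4[of 0 u] len by (simp add: eval_nat_numeral)
    moreover have "u!0 = Some a" using uA[of 0] len unfolding a_def by (cases u) auto
    moreover have "u!2 = Some b" "u!3 = Some c" using uA[of 2] uA[of 3] len by (auto simp: b_def c_def)
    ultimately show ?thesis using u1 by simp
  qed
  have d0: "int_distinct [Some a, None, Some b, Some c]" using idist[of 0] len F0 by simp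
  have ab: "a \<noteq> b" by (rule idist_ne[OF d0, of 0 2]; simp)
  have ac: "a \<noteq> c" by (rule idist_ne[OF d0, of 0 3]; simp)
  have bc: "b \<noteq> c" by (rule idist_ne[OF d0, of 2 3]; simp)
  note abc = ab ac bc
  have cov0: "\<And>p. covers (factor u 4 0) p \<longleftrightarrow> length p = 4 \<and> (a<b \<longleftrightarrow> p!0<p!2)
     \<and> (a<c \<longleftrightarrow> p!0<p!3) \<and> (b<a \<longleftrightarrow> p!2<p!0) \<and> (b<c \<longleftrightarrow> p!2<p!3)
     \<and> (c<a \<longleftrightarrow> p!3<p!0) \<and> (c<b \<longleftrightarrow> p!3<p!2)"
    unfolding F0 by (simp add: covers_alt d0 allSuc eval_nat_numeral)
  show False
  proof (cases "length u = 4")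
    case True
    define p where "p = (if b < c then [4,3,2,1] else [1,2,3,4::nat])"
    have pp: "p \<in> perms 4" unfolding p_def by (simp add: perms_def) auto
    obtain i where "i + 4 \<le> length u" "covers (factor u 4 i) p" using E[OF pp] by blast
    then have "covers (factor u 4 0) p" using True by simp
    then show False using abc unfolding cov0 p_def by (auto split: if_splits)
  next
    case False
    then have len5: "length u \<ge> 5" using len by simp
    define d where "d = A 4"
    have F1: "factor u 4 1 = [None, Some b, Some c, Some d]"
    proof -
      have "factor u 4 1 = [u!1,u!2,u!3,u!4]" using factor4[of 1 u] len5 by (simp add: eval_nat_numeral)
      moreover have "u!4 = Some d" "u!2 = Some b" "u!3 = Some c" using uA[of 4] uA[of 2] uA[of 3] len5 by (auto simp: d_def b_def c_def)
      ultimately show ?thesis using u1 by simp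
    qed
    have d1: "int_distinct [None, Some b, Some c, Some d]" using idist[of 1] len5 F1 by simp
    have bd: "b \<noteq> d" by (rule idist_ne[OF d1, of 1 3]; simp)
    have cd: "c \<noteq> d" by (rule idist_ne[OF d1, of 2 3]; simp)
    note bcd = bd cd
    have cov1: "\<And>p. covers (factor u 4 1) p \<longleftrightarrow> length p = 4 \<and> (b<c \<longleftrightarrow> p!1<p!2)
       \<and> (b<d \<longleftrightarrow> p!1<p!3) \<and> (c<b \<longleftrightarrow> p!2<p!1) \<and> (c<d \<longleftrightarrow> p!2<p!3)
       \<and> (d<b \<longleftrightarrow> p!3<p!1) \<and> (d<c \<longleftrightarrow> p!3<p!2)"
      unfolding F1 by (simp add: covers_alt d1 allSuc eval_nat_numeral)
    have key: "6 \<le> length u \<and> covers (factor u 4 2) p"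
      if pp: "p \<in> perms 4" and n0: "\<not> covers (factor u 4 0) p" and n1: "\<not> covers (factor u 4 1) p"
        and s1: "b<c \<longleftrightarrow> p!0<p!1" and s2: "b<d \<longleftrightarrow> p!0<p!2" and s3: "c<d \<longleftrightarrow> p!1<p!2" for p
    proof -
      obtain i where i: "i + 4 \<le> length u" "covers (factor u 4 i) p" using E[OF pp] by blast
      have i2: "i \<ge> 2" using i n0 n1 by (cases i; cases "i - 1"; auto)
      have "i = 2"
      proof (rule ccontr)
        assume "i \<noteq> 2"
        with i2 obtain j where j: "i = Suc j" "j \<ge> 2" by (cases i) auto
        have Fj: "factor u 4 j = [Some (A j), Some (A i), Some (A (i+1)), Some (A (i+2))]"
          using factor4[of j u] i j uA by (simp add: eval_nat_numeral)
        have Fi: "factor u 4 i = [Some (A i), Some (A (i+1)), Some (A (i+2)), Some (A (i+3))]"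
          using factor4[of i u] i j uA by (simp add: eval_nat_numeral)
        have dA: "distinct [A j, A i, A (i+1), A (i+2)]"
          using idist[of j] i j Fj idist4 by simp
        then obtain r where r: "r \<in> perms 4" "covers (factor u 4 j) r" using L[OF \<open>distinct _\<close>] unfolding Fj[symmetric] by blast
        have lr: "length r = 4" using r(1) by (simp add: perms_def)
        have cr: "\<And>k l x y. k < 4 \<Longrightarrow> l < 4 \<Longrightarrow> [Some (A j), Some (A i), Some (A (i+1)), Some (A (i+2))]!k = Some x
           \<Longrightarrow> [Some (A j), Some (A i), Some (A (i+1)), Some (A (i+2))]!l = Some y \<Longrightarrow> (x<y \<longleftrightarrow> r!k<r!l)"
          using covers_cmp[of "factor u 4 j" r] r(2) Fj by simp
        have cp: "\<And>k l x y. k < 4 \<Longrightarrow> l < 4 \<Longrightarrow> [Some (A i), Some (A (i+1)), Some (A (i+2)), Some (A (i+3))]!k = Some x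
           \<Longrightarrow> [Some (A i), Some (A (i+1)), Some (A (i+2)), Some (A (i+3))]!l = Some y \<Longrightarrow> (x<y \<longleftrightarrow> p!k<p!l)"
          using covers_cmp[of "factor u 4 i" p] i(2) Fi by simp
        have r12: "A i < A (i+1) \<longleftrightarrow> r!1<r!2" "A i < A (i+2) \<longleftrightarrow> r!1<r!3" "A (i+1) < A (i+2) \<longleftrightarrow> r!2<r!3"
          "A (i+1) < A i \<longleftrightarrow> r!2<r!1" "A (i+2) < A i \<longleftrightarrow> r!3<r!1" "A (i+2) < A (i+1) \<longleftrightarrow> r!3<r!2"
          by (rule cr; simp)+
        have p12: "A i < A (i+1) \<longleftrightarrow> p!0<p!1" "A i < A (i+2) \<longleftrightarrow> p!0<p!2" "A (i+1) < A (i+2) \<longleftrightarrow> p!1<p!2"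
          "A (i+1) < A i \<longleftrightarrow> p!1<p!0" "A (i+2) < A i \<longleftrightarrow> p!2<p!0" "A (i+2) < A (i+1) \<longleftrightarrow> p!2<p!1"
          by (rule cp; simp)+
        have "covers (factor u 4 1) r"
          unfolding cov1
        proof (intro conjI)
          show "length r = 4" by (rule lr)
          have n1: "A i \<noteq> A (i+1)" "A i \<noteq> A (i+2)" "A (i+1) \<noteq> A (i+2)" using dA by auto
          have o1: "A (i+1) < A i \<longleftrightarrow> \<not> A i < A (i+1)" using n1 by auto
          have o2: "A (i+2) < A i \<longleftrightarrow> \<not> A i < A (i+2)" using n1 by auto
          have o3: "A (i+2) < A (i+1) \<longleftrightarrow> \<not> A (i+1) < A (i+2)" using n1 by auto
          have q1: "c < b \<longleftrightarrow> \<not> b < c" "d < b \<longleftrightarrow> \<not> b < d" "d < c \<longleftrightarrow> \<not> c < d"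
            using abc bcd by auto
          show "b<c \<longleftrightarrow> r!1<r!2" using s1 p12(1) r12(1) by blast
          show "b<d \<longleftrightarrow> r!1<r!3" using s2 p12(2) r12(2) by blast
          show "c<d \<longleftrightarrow> r!2<r!3" using s3 p12(3) r12(3) by blast
          show "c<b \<longleftrightarrow> r!2<r!1" using s1 p12(1) r12(4) o1 q1 by blast
          show "d<b \<longleftrightarrow> r!3<r!1" using s2 p12(2) r12(5) o2 q1 by blast
          show "d<c \<longleftrightarrow> r!3<r!2" using s3 p12(3) r12(6) o3 q1 by blast
        qed
        then have "j = 1" using U1[OF r(1), of j 1] r(2) i j len5 by simp
        then show False using j by simp
      qed
      then show ?thesis using i by simp
    qed
    have nlt: "b<a \<longleftrightarrow> \<not> a<b" "c<a \<longleftrightarrow> \<not>a<c" "c<b \<longleftrightarrow> \<not>b<c" "d<b \<longleftrightarrow> \<not> b<d" "d<c \<longleftrightarrow> \<not>c<d"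
      using abc bcd by auto
    have twoP: False if "p \<in> perms 4" "q \<in> perms 4" "\<not>covers (factor u 4 0) p" "\<not>covers (factor u 4 1) p"
      "b<c \<longleftrightarrow> p!0<p!1" "b<d \<longleftrightarrow> p!0<p!2" "c<d \<longleftrightarrow> p!1<p!2"
      "\<not>covers (factor u 4 0) q" "\<not>covers (factor u 4 1) q"
      "b<c \<longleftrightarrow> q!0<q!1" "b<d \<longleftrightarrow> q!0<q!2" "c<d \<longleftrightarrow> q!1<q!2"
      "k<4" "l<4" "p!k<p!l" "\<not> q!k<q!l" for p q k l
    proof -
      have kp: "6 \<le> length u \<and> covers (factor u 4 2) p" by (rule key) (use that in auto)
      have kq: "covers (factor u 4 2) q" by (rule key[THEN conjunct2]) (use that in auto)
      have "factor u 4 2 ! k = Some (A (2+k))" using factor_nth[of 2 4 u k] uA[of "2+k"] kp that(13) by simp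
      moreover have "factor u 4 2 ! l = Some (A (2+l))" using factor_nth[of 2 4 u l] uA[of "2+l"] kp that(14) by simp
      moreover have "length (factor u 4 2) = 4" using kp by (auto simp: factor_def)
      ultimately show False using covers_diff[of "factor u 4 2" p q k l "A (2+k)" "A (2+l)"] kp kq that(13-16) by auto
    qed
    consider (CA) "b<c \<longleftrightarrow> c<d" | (CB) "b<c" "d<c" | (CC) "c<b" "c<d" using bc cd by fastforce
    then show False
    proof cases
      case CA
      have "\<exists>p\<in>set [[1,2,3,4],[3,1,2,4],[4,1,2,3],[4,3,2,1],[2,4,3,1],[1,4,3,2::nat]].
         covers (factor u 4 0) p \<and> covers (factor u 4 1) p"
        using CA bc cd ab ac
        by (cases "a<b"; cases "a<c"; cases "b<c"; cases "c<d"; simp add: cov0 cov1[unfolded One_nat_def] nlt)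
      then obtain p where "p \<in> set [[1,2,3,4],[3,1,2,4],[4,1,2,3],[4,3,2,1],[2,4,3,1],[1,4,3,2::nat]]"
         "covers (factor u 4 0) p" "covers (factor u 4 1) p" by blast
      moreover have "p \<in> perms 4" by (rule inL24) (use calculation in \<open>auto simp: L24_def\<close>)
      ultimately show False using U1[of p 0 1] len5 by simp
    next
      case CB
      show False
      proof (cases "b<d")
        case True
        show False by (rule twoP[of "[1,4,3,2]" "[2,4,3,1]" 0 3]; use CB True in \<open>simp add: cov0 cov1[unfolded One_nat_def] nlt inL24 L24_def\<close>)
      next
        case False
        show False
        proof (cases "a<c")
          case True
          show False by (rule twoP[of "[3,4,1,2]" "[3,4,2,1]" 2 3]; use CB \<open>\<not> b<d\<close> True in \<open>simp add: cov0 cov1[unfolded One_nat_def] nlt inL24 L24_def\<close>)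
        next
          case False
          show False by (rule twoP[of "[2,4,1,3]" "[3,4,2,1]" 2 3]; use CB \<open>\<not> b<d\<close> False in \<open>simp add: cov0 cov1[unfolded One_nat_def] nlt inL24 L24_def\<close>)
        qed
      qed
    next
      case CC
      show False
      proof (cases "b<d")
        case False
        show False by (rule twoP[of "[3,1,2,4]" "[4,1,2,3]" 0 3]; use CC False in \<open>simp add: cov0 cov1[unfolded One_nat_def] nlt inL24 L24_def\<close>)
      next
        case True
        show False
        proof (cases "a<c")
          case True
          show False by (rule twoP[of "[2,1,3,4]" "[3,1,4,2]" 2 3]; use CC \<open>b<d\<close> True in \<open>simp add: cov0 cov1[unfolded One_nat_def] nlt inL24 L24_def\<close>)
        next
          case False
          show False by (rule twoP[of "[2,1,3,4]" "[2,1,4,3]" 2 3]; use CC \<open>b<d\<close> False in \<open>simp add: cov0 cov1[unfolded One_nat_def] nlt inL24 L24_def\<close>)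
        qed
      qed
    qed
  qed
qed

lemma no3:
  assumes up: "up_word 3 u" and u1: "u!1 = None"
    and oth: "\<forall>i<length u. i \<noteq> 1 \<longrightarrow> u ! i \<noteq> Diamond"
  shows False
proof -
  have len: "length u \<ge> 3" and idist: "\<And>i. i+3 \<le> length u \<Longrightarrow> int_distinct (factor u 3 i)"
    and uniq: "\<forall>p\<in>perms 3. \<exists>!i. i + 3 \<le> length u \<and> covers (factor u 3 i) p"
    using up unfolding up_word_def by auto
  define A where "A k = the (u!k)" for k
  have uA: "\<And>k. k < length u \<Longrightarrow> k \<noteq> 1 \<Longrightarrow> u!k = Some (A k)"
    using oth by (auto simp: A_def)
  have U1: "\<And>p i j. p \<in> perms 3 \<Longrightarrow> i+3 \<le> length u \<Longrightarrow> j+3 \<le> length u \<Longrightarrow>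
     covers (factor u 3 i) p \<Longrightarrow> covers (factor u 3 j) p \<Longrightarrow> i = j"
    using uniq by blast
  have E: "\<And>p. p \<in> perms 3 \<Longrightarrow> \<exists>i. i+3 \<le> length u \<and> covers (factor u 3 i) p"
    using uniq by blast
  define a where "a = A 0"
  define b where "b = A 2"
  have F0: "factor u 3 0 = [Some a, None, Some b]"
  proof -
    have "factor u 3 0 = [u!0,u!1,u!2]" using factor3[of 0 u] len by (simp add: eval_nat_numeral)
    moreover have "u!0 = Some a" using uA[of 0] len unfolding a_def by (cases u) auto
    moreover have "u!2 = Some b" using uA[of 2] len by (auto simp: b_def)
    ultimately show ?thesis using u1 by simp
  qed
  have d0: "int_distinct [Some a, None, Some b]" using idist[of 0] len F0 by simp
  have ab: "a \<noteq> b" by (rule idist_ne[OF d0, of 0 2]; simp)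
  have cov0: "\<And>p. covers (factor u 3 0) p \<longleftrightarrow> length p = 3 \<and> (a<b \<longleftrightarrow> p!0<p!2)
     \<and> (b<a \<longleftrightarrow> p!2<p!0)"
    unfolding F0 by (simp add: covers_alt d0 allSuc eval_nat_numeral)
  have nab: "b<a \<longleftrightarrow> \<not> a<b" using ab by auto
  show False
  proof (cases "length u = 3")
    case True
    define p where "p = (if a < b then [3,2,1] else [1,2,3::nat])"
    have pp: "p \<in> perms 3" unfolding p_def by (simp add: perms_def) auto
    obtain i where "i + 3 \<le> length u" "covers (factor u 3 i) p" using E[OF pp] by blast
    then have "covers (factor u 3 0) p" using True by simp
    then show False using ab unfolding cov0 p_def by (auto split: if_splits)
  next
    case False
    then have len4: "length u \<ge> 4" using len by simp
    define c where "c = A 3"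
    have F1: "factor u 3 1 = [None, Some b, Some c]"
    proof -
      have "factor u 3 1 = [u!1,u!2,u!3]" using factor3[of 1 u] len4 by (simp add: eval_nat_numeral)
      moreover have "u!2 = Some b" "u!3 = Some c" using uA[of 2] uA[of 3] len4 by (auto simp: b_def c_def)
      ultimately show ?thesis using u1 by simp
    qed
    have d1: "int_distinct [None, Some b, Some c]" using idist[of 1] len4 F1 by simp
    have bc: "b \<noteq> c" by (rule idist_ne[OF d1, of 1 2]; simp)
    have cov1: "\<And>p. covers (factor u 3 1) p \<longleftrightarrow> length p = 3 \<and> (b<c \<longleftrightarrow> p!1<p!2)
       \<and> (c<b \<longleftrightarrow> p!2<p!1)"
      unfolding F1 by (simp add: covers_alt d1 allSuc eval_nat_numeral)
    have nbc: "c<b \<longleftrightarrow> \<not> b<c" using bc by auto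
    have "\<exists>p\<in>set [[1,2,3],[1,3,2],[3,1,2],[3,2,1::nat]].
         covers (factor u 3 0) p \<and> covers (factor u 3 1) p"
      by (cases "a<b"; cases "b<c"; simp add: cov0 cov1[unfolded One_nat_def] nab nbc)
    then obtain p where p: "p \<in> set [[1,2,3],[1,3,2],[3,1,2],[3,2,1::nat]]"
       "covers (factor u 3 0) p" "covers (factor u 3 1) p" by blast
    have "p \<in> perms 3" using p(1) by (simp add: perms_def) auto
    then show False using U1[of p 0 1] p len4 by simp
  qed
qed

theorem proposition2:
  fixes n :: nat
  assumes "n \<in> {3, 4}"
  shows "\<not> (\<exists>u. up_word n u \<and> length u \<ge> 2 \<and> u ! 1 = Diamond \<and>
              (\<forall>i < length u. i \<noteq> 1 \<longrightarrow> u ! i \<noteq> Diamond))"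
proof
  assume "\<exists>u. up_word n u \<and> length u \<ge> 2 \<and> u ! 1 = Diamond \<and>
              (\<forall>i < length u. i \<noteq> 1 \<longrightarrow> u ! i \<noteq> Diamond)"
  then obtain u where u: "up_word n u" "u ! 1 = Diamond" "\<forall>i < length u. i \<noteq> 1 \<longrightarrow> u ! i \<noteq> Diamond"
    by blast
  from assms have "n = 3 \<or> n = 4" by simp
  then show False
  proof
    assume "n = 3" then show False using no3 u by simp
  next
    assume "n = 4" then show False using no4 u by simp
  qed
qed

end
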